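(* Let $\Phi_1$ and $\Phi_2$ be two $\mathcal{C}^1$ convex growth functions with $\Phi_2\in\mathscr{U}$. Assume that $\Phi_1$ satisfies the $\nabla_2$-condition and that $\frac{\Phi_2}{\Phi_1}$ is nondecreasing. Let $\mu$ be a positive Borel measure on $\mathbb{C}_+$. Then the following assertions are equivalent. (a) There exists a constant $C_1>0$ such that for any interval $I\subset \mathbb{R}$, $\mu(Q_I)\le \dfrac{C_1}{\Phi_2\circ\Phi_1^{-1}\left(\frac{1}{|I|}\right)}$. (b) There exists a constant $C_2>0$ such that for any $f\in H^{\Phi_1}(\mathbb{C}_+)$, $f\neq 0$, $$\sup_{\lambda>0}\Phi_2(\lambda)\,\mu\left(\left\{z\in \mathbb{C}_+:\,|f(z)|>C_2\lambda\|f^\star\|_{L^{\Phi_1}}^{lux} \right\}\right)\le 1.$$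
   Context: $\mathbb{C}_+=\{x+iy: y>0\}$. A growth function is a continuous nondecreasing function from $[0,\infty)$ onto $[0,\infty)$; $\Phi^{-1}$ is its inverse. $\mathscr{U}^q$ ($q\ge1$) is the set of growth functions $\Phi$ with $\Phi(st)\le Ct^q\Phi(s)$ for $s>0,t\ge1$ and $t\mapsto\Phi(t)/t$ nondecreasing; $\mathscr{U}=\bigcup_{q\ge1}\mathscr{U}^q$. A convex growth function satisfies the $\nabla_2$-condition if both it and its complementary function $\Psi(s)=\sup_{t\ge0}\{ts-\Phi(t)\}$ satisfy $F(2t)\le KF(t)$ for some $K>1$, all $t\ge0$. $Q_I=\{x+iy:x\in I,0<y<|I|\}$. $\|g\|_{L^\Phi}^{lux}=\inf\{\lambda>0:\int_{\mathbb{R}}\Phi(|g|/\lambda)dx\le1\}$; $H^\Phi(\mathbb{C}_+)$: holomorphic $f$ with $\sup_{y>0}\|f(\cdot+iy)\|^{lux}_{L^\Phi}<\infty$. $f^\star(x)=\sup\{|f(t+iy)|: |t-x|<y\}$ is the nontangential maximal function. *)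

theory Defs
  imports "HOL-Analysis.Analysis"
begin

definition upper_half_plane :: "complex set" where
  "upper_half_plane = {z. Im z > 0}"

definition growth_function :: "(real \<Rightarrow> real) \<Rightarrow> bool" where
  "growth_function \<Phi> \<longleftrightarrow> continuous_on {0..} \<Phi> \<and> mono_on {0..} \<Phi> \<and> \<Phi> ` {0..} = {0..}"

text \<open>Inverse of a growth function (unique on the positive reals for convex growth functions).\<close>
definition growth_inv :: "(real \<Rightarrow> real) \<Rightarrow> real \<Rightarrow> real" where
  "growth_inv \<Phi> s = (SOME t. t \<ge> 0 \<and> \<Phi> t = s)"

definition C1_on_nonneg :: "(real \<Rightarrow> real) \<Rightarrow> bool" where
  "C1_on_nonneg \<Phi> \<longleftrightarrow> (\<exists>\<Phi>'. continuous_on {0..} \<Phi>' \<and>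
      (\<forall>t\<ge>0. (\<Phi> has_real_derivative \<Phi>' t) (at t within {0..})))"

definition class_U_q :: "real \<Rightarrow> (real \<Rightarrow> real) \<Rightarrow> bool" where
  "class_U_q q \<Phi> \<longleftrightarrow> growth_function \<Phi> \<and>
      (\<exists>C>0. \<forall>s>0. \<forall>t\<ge>1. \<Phi> (s * t) \<le> C * t powr q * \<Phi> s) \<and>
      mono_on {0<..} (\<lambda>t. \<Phi> t / t)"

definition class_U :: "(real \<Rightarrow> real) \<Rightarrow> bool" where
  "class_U \<Phi> \<longleftrightarrow> (\<exists>q\<ge>1. class_U_q q \<Phi>)"

definition complementary :: "(real \<Rightarrow> real) \<Rightarrow> real \<Rightarrow> ereal" where
  "complementary \<Phi> s = (SUP t\<in>{0..}. ereal (t * s - \<Phi> t))"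

definition doubling_ereal :: "(real \<Rightarrow> ereal) \<Rightarrow> bool" where
  "doubling_ereal F \<longleftrightarrow> (\<exists>K>1. \<forall>t\<ge>0. F (2 * t) \<le> ereal K * F t)"

definition nabla2 :: "(real \<Rightarrow> real) \<Rightarrow> bool" where
  "nabla2 \<Phi> \<longleftrightarrow> doubling_ereal (\<lambda>t. ereal (\<Phi> t)) \<and> doubling_ereal (complementary \<Phi>)"

text \<open>Carleson box over I, of side length len = |I|.\<close>
definition carleson_box :: "real set \<Rightarrow> real \<Rightarrow> complex set" where
  "carleson_box I len = {z. Re z \<in> I \<and> 0 < Im z \<and> Im z < len}"

definition lux_norm :: "(real \<Rightarrow> real) \<Rightarrow> (real \<Rightarrow> ereal) \<Rightarrow> ereal" where
  "lux_norm \<Phi> g = Inf {ereal l | l. l > 0 \<and>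
      (\<integral>\<^sup>+ x. (if g x = \<infinity> then \<infinity> else ennreal (\<Phi> (real_of_ereal \<bar>g x\<bar> / l))) \<partial>lborel) \<le> 1}"

definition lux :: "(real \<Rightarrow> real) \<Rightarrow> (real \<Rightarrow> complex) \<Rightarrow> ereal" where
  "lux \<Phi> g = lux_norm \<Phi> (\<lambda>x. ereal (norm (g x)))"

definition hardy_orlicz :: "(real \<Rightarrow> real) \<Rightarrow> (complex \<Rightarrow> complex) set" where
  "hardy_orlicz \<Phi> = {f. f holomorphic_on upper_half_plane \<and>
      (SUP y\<in>{0<..}. lux \<Phi> (\<lambda>x. f (complex_of_real x + \<i> * complex_of_real y))) < \<infinity>}"

definition nontangential_max :: "(complex \<Rightarrow> complex) \<Rightarrow> real \<Rightarrow> ereal" where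
  "nontangential_max f x = (SUP p\<in>{(t, y). y > 0 \<and> \<bar>t - x\<bar> < y}.
      ereal (norm (f (Complex (fst p) (snd p)))))"

end

theory Submission
  imports Defs
begin


lemma gf_zero: assumes "growth_function \<Phi>" shows "\<Phi> 0 = 0"
proof -
  have "0 \<in> \<Phi> ` {0..}" using assms unfolding growth_function_def by auto
  then obtain t where t: "t \<ge> 0" "\<Phi> t = 0" by auto
  have "mono_on {0..} \<Phi>" using assms unfolding growth_function_def by auto
  then have "\<Phi> 0 \<le> \<Phi> t" using t by (metis atLeast_iff mono_onD order_refl)
  moreover have "\<Phi> 0 \<ge> 0" using assms unfolding growth_function_def by auto
  ultimately show ?thesis using t by simp
qed

lemma gf_nonneg: assumes "growth_function \<Phi>" "t \<ge> 0" shows "\<Phi> t \<ge> 0"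
  using assms unfolding growth_function_def by auto

lemma gf_mono: assumes "growth_function \<Phi>" "0 \<le> s" "s \<le> t" shows "\<Phi> s \<le> \<Phi> t"
proof -
  have "mono_on {0..} \<Phi>" using assms unfolding growth_function_def by auto
  then show ?thesis using assms by (auto intro: mono_onD)
qed

lemma gf_pos_aux:
  assumes g: "growth_function \<Phi>" and t: "t > 0" and z: "\<And>n::nat. \<Phi> (2^n * t) = 0"
  shows False
proof -
  have "1 \<in> \<Phi> ` {0..}" using g unfolding growth_function_def by auto
  then obtain s where s: "s \<ge> 0" "\<Phi> s = 1" by auto
  obtain n::nat where "s / t < 2 ^ n" using real_arch_pow[of 2 "s/t"] by auto
  then have "s \<le> 2^n * t" using t by (simp add: field_simps)
  then have "\<Phi> s \<le> \<Phi> (2^n*t)" using gf_mono[OF g s(1)] by auto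
  then show False using z s by simp
qed

lemma gf_pos_nabla:
  assumes g: "growth_function \<Phi>" and n: "nabla2 \<Phi>" and t: "t > 0"
  shows "\<Phi> t > 0"
proof (rule ccontr)
  assume "\<not> \<Phi> t > 0"
  then have z: "\<Phi> t = 0" using gf_nonneg[OF g, of t] t by simp
  obtain K where K: "K > 1" "\<And>t. t \<ge> 0 \<Longrightarrow> ereal (\<Phi> (2*t)) \<le> ereal K * ereal (\<Phi> t)"
    using n unfolding nabla2_def doubling_ereal_def by auto
  have "\<Phi> (2^n * t) = 0" for n::nat
  proof (induction n)
    case 0 then show ?case using z by simp
  next
    case (Suc n)
    have "ereal (\<Phi> (2 * (2^n*t))) \<le> ereal K * ereal (\<Phi> (2^n*t))" using K(2)[of "2^n*t"] t by simp
    then have "\<Phi> (2 * (2^n*t)) \<le> 0" using Suc by simp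
    moreover have "\<Phi> (2 * (2^n*t)) \<ge> 0" using gf_nonneg[OF g] t by simp
    ultimately show ?case by (simp add: mult.assoc)
  qed
  then show False using gf_pos_aux[OF g t] by blast
qed

lemma U_props:
  assumes "class_U \<Phi>"
  obtains C q where "C > 0" "q \<ge> 1" "\<And>s t. s > 0 \<Longrightarrow> t \<ge> 1 \<Longrightarrow> \<Phi> (s*t) \<le> C * t powr q * \<Phi> s"
    "mono_on {0<..} (\<lambda>t. \<Phi> t / t)" "growth_function \<Phi>"
  using assms unfolding class_U_def class_U_q_def by blast

lemma U_pos:
  assumes u: "class_U \<Phi>" and t: "t > 0" shows "\<Phi> t > 0"
proof (rule ccontr)
  obtain C q where Cq: "C > 0" "q \<ge> 1" "\<And>s t. s > 0 \<Longrightarrow> t \<ge> 1 \<Longrightarrow> \<Phi> (s*t) \<le> C * t powr q * \<Phi> s"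
    and g: "growth_function \<Phi>" using U_props[OF u] by metis
  assume "\<not> \<Phi> t > 0"
  then have z: "\<Phi> t = 0" using gf_nonneg[OF g, of t] t by simp
  have "\<Phi> (2^n * t) = 0" for n::nat
  proof -
    have "\<Phi> (t * 2^n) \<le> C * (2^n) powr q * \<Phi> t" using Cq(3)[of t "2^n"] t by simp
    then have "\<Phi> (t * 2^n) \<le> 0" using z by simp
    moreover have "\<Phi> (t * 2^n) \<ge> 0" using gf_nonneg[OF g] t by simp
    ultimately show ?thesis by (simp add: mult.commute)
  qed
  then show False using gf_pos_aux[OF g t] by blast
qed

lemma U_lower:
  assumes u: "class_U \<Phi>" and l: "l > 0" and t: "t \<ge> 1" shows "t * \<Phi> l \<le> \<Phi> (l * t)"
proof -
  have m: "mono_on {0<..} (\<lambda>t. \<Phi> t / t)" using U_props[OF u] by metis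
  have "\<Phi> l / l \<le> \<Phi> (l*t) / (l*t)" using mono_onD[OF m, of l "l*t"] l t by simp
  then show ?thesis using l t by (simp add: field_simps)
qed

lemma convex_scale:
  assumes c: "convex_on {0..} \<Phi>" and z: "\<Phi> 0 = 0" and th: "0 \<le> \<theta>" "\<theta> \<le> 1" and t: "t \<ge> 0"
  shows "\<Phi> (\<theta> * t) \<le> \<theta> * \<Phi> t"
  using convex_onD[OF c, of \<theta> 0 t] th t z by simp

lemma strict_mono_gf:
  assumes g: "growth_function \<Phi>" and c: "convex_on {0..} \<Phi>" and pos: "\<And>t. t > 0 \<Longrightarrow> \<Phi> t > 0"
    and st: "0 \<le> s" "s < t"
  shows "\<Phi> s < \<Phi> t"
proof -
  have "\<Phi> ((s/t) * t) \<le> (s/t) * \<Phi> t"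
    by (rule convex_scale[OF c gf_zero[OF g]]) (use st in auto)
  also have "\<dots> < \<Phi> t" using st pos[of t] by (simp add: mult_less_cancel_right1 field_simps)
  finally show ?thesis using st by simp
qed

lemma growth_inv_prop:
  assumes g: "growth_function \<Phi>" and s: "s \<ge> 0"
  shows "growth_inv \<Phi> s \<ge> 0" "\<Phi> (growth_inv \<Phi> s) = s"
proof -
  have "\<exists>t. t \<ge> 0 \<and> \<Phi> t = s" using g s unfolding growth_function_def by force
  then have "growth_inv \<Phi> s \<ge> 0 \<and> \<Phi> (growth_inv \<Phi> s) = s"
    unfolding growth_inv_def by (rule someI_ex)
  then show "growth_inv \<Phi> s \<ge> 0" "\<Phi> (growth_inv \<Phi> s) = s" by auto
qed



lemma half_cauchy: "(\<integral>\<^sup>+x. ennreal (1 / (1 + x\<^sup>2)) * indicator {0..} x \<partial>lborel) = ennreal (pi/2)"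
proof (subst nn_integral_FTC_atLeast[where F=arctan and T="pi/2"])
  show "(arctan \<longlongrightarrow> pi / 2) at_top" by (rule tendsto_arctan_at_top)
qed (auto intro!: derivative_eq_intros simp: add_nonneg_eq_0_iff field_simps power2_eq_square)

lemma cauchy_int: "(\<integral>\<^sup>+x. ennreal (1 / (1 + x\<^sup>2)) \<partial>lborel) \<le> ennreal pi"
proof -
  let ?f = "\<lambda>x::real. ennreal (1 / (1 + x\<^sup>2))"
  have "(\<integral>\<^sup>+x. ?f x \<partial>lborel) = (\<integral>\<^sup>+x. ?f x * indicator {0..} x + ?f x * indicator {..<0} x \<partial>lborel)"
    by (intro nn_integral_cong) (auto split: split_indicator)
  also have "\<dots> = (\<integral>\<^sup>+x. ?f x * indicator {0..} x \<partial>lborel) + (\<integral>\<^sup>+x. ?f x * indicator {..<0} x \<partial>lborel)"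
    by (rule nn_integral_add) auto
  also have "(\<integral>\<^sup>+x. ?f x * indicator {..<0} x \<partial>lborel) = (\<integral>\<^sup>+x. ?f (0 + (-1) * x) * indicator {..<0} (0 + (-1) * x) \<partial>lborel)"
    using nn_integral_real_affine[of "\<lambda>x. ?f x * indicator {..<0} x" "-1" 0] by simp
  also have "\<dots> \<le> (\<integral>\<^sup>+x. ?f x * indicator {0..} x \<partial>lborel)"
    by (intro nn_integral_mono) (auto split: split_indicator)
  finally have "(\<integral>\<^sup>+x. ?f x \<partial>lborel) \<le> ennreal (pi/2) + ennreal (pi/2)"
    using half_cauchy by (metis add_left_mono)
  then show ?thesis
    by (simp add: ennreal_plus[symmetric] del: ennreal_plus)
qed

lemma cauchy_scaled:
  fixes L x0 :: real assumes L: "L > 0"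
  shows "(\<integral>\<^sup>+x. ennreal (L\<^sup>2 / ((x - x0)\<^sup>2 + L\<^sup>2)) \<partial>lborel) \<le> ennreal (pi * L)"
proof -
  let ?k = "\<lambda>x::real. ennreal (L\<^sup>2 / ((x - x0)\<^sup>2 + L\<^sup>2))"
  have "(\<integral>\<^sup>+x. ?k x \<partial>lborel) = ennreal \<bar>L\<bar> * (\<integral>\<^sup>+x. ?k (x0 + L * x) \<partial>lborel)"
    using nn_integral_real_affine[of ?k L x0] L by simp
  also have "(\<lambda>x. ?k (x0 + L * x)) = (\<lambda>x. ennreal (1 / (1 + x\<^sup>2)))"
  proof
    fix x :: real
    have "L\<^sup>2 / ((x0 + L * x - x0)\<^sup>2 + L\<^sup>2) = 1 / (1 + x\<^sup>2)"
    proof -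
      have "(x0 + L * x - x0)\<^sup>2 + L\<^sup>2 = L\<^sup>2 * (1 + x\<^sup>2)" by (simp add: algebra_simps power2_eq_square)
      then show ?thesis using L by simp
    qed
    then show "?k (x0 + L * x) = ennreal (1 / (1 + x\<^sup>2))" by simp
  qed
  also have "ennreal \<bar>L\<bar> * (\<integral>\<^sup>+x. ennreal (1 / (1 + x\<^sup>2)) \<partial>lborel) \<le> ennreal L * ennreal pi"
    using L cauchy_int by (simp add: mult_left_mono)
  finally show ?thesis using L by (simp add: ennreal_mult[symmetric] mult.commute)
qed



lemma interval_mem:
  fixes C :: "real set"
  assumes "is_interval C" "a \<in> C" "b \<in> C" "a \<le> x" "x \<le> b" shows "x \<in> C"
  using assms unfolding is_interval_1 by blast

lemma comp_interval:
  fixes U :: "real set"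
  assumes U: "open U" and fin: "emeasure lborel U < \<infinity>" and C: "C \<in> components U"
  shows "Inf C < Sup C" "{Inf C<..<Sup C} \<subseteq> C" "C \<subseteq> {Inf C..Sup C}"
    "emeasure lborel C = ennreal (Sup C - Inf C)" "open C"
proof -
  have Cne: "C \<noteq> {}" using C by (rule in_components_nonempty)
  have Copen: "open C" using open_components[OF U C] .
  show "open C" by fact
  have Cint: "is_interval C" using in_components_connected[OF C] is_interval_connected_1 by blast
  have CO: "C \<subseteq> U" using C by (rule in_components_subset)
  obtain m where m: "emeasure lborel U = ennreal m" "m \<ge> 0" using fin
    by (cases "emeasure lborel U") auto
  obtain c where c: "c \<in> C" using Cne by auto
  have bdd_above: "bdd_above C"
  proof (rule ccontr)
    assume nb: "\<not> bdd_above C"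
    have "{c..c + (m+1)} \<subseteq> C"
    proof
      fix x assume x: "x \<in> {c..c+(m+1)}"
      obtain y where y: "y \<in> C" "y > x" using nb unfolding bdd_above_def by (meson not_le)
      show "x \<in> C" using interval_mem[OF Cint c y(1)] interval_mem[OF Cint y(1) c] x y(2) by auto
    qed
    then have "emeasure lborel {c..c + (m+1)} \<le> emeasure lborel U"
      using CO U by (intro emeasure_mono) auto
    then show False using m by simp
  qed
  have bdd_below: "bdd_below C"
  proof (rule ccontr)
    assume nb: "\<not> bdd_below C"
    have "{c - (m+1)..c} \<subseteq> C"
    proof
      fix x assume x: "x \<in> {c - (m+1)..c}"
      obtain y where y: "y \<in> C" "y < x" using nb unfolding bdd_below_def by (meson not_le)
      show "x \<in> C" using interval_mem[OF Cint c y(1)] interval_mem[OF Cint y(1) c] x y(2) by auto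
    qed
    then have "emeasure lborel {c - (m+1)..c} \<le> emeasure lborel U"
      using CO U by (intro emeasure_mono) auto
    then show False using m by simp
  qed
  obtain e where e: "e > 0" "ball c e \<subseteq> C" using Copen c open_contains_ball by blast
  have "c - e/2 \<in> ball c e" "c + e/2 \<in> ball c e" using e by (auto simp: dist_real_def)
  then have "c - e/2 \<in> C" "c + e/2 \<in> C" using e(2) by auto
  then have "Inf C \<le> c - e/2" "c + e/2 \<le> Sup C"
    using cInf_lower[OF _ bdd_below] cSup_upper[OF _ bdd_above] by blast+
  then show lt: "Inf C < Sup C" using e by simp
  show sub1: "{Inf C<..<Sup C} \<subseteq> C"
  proof
    fix x assume x: "x \<in> {Inf C<..<Sup C}"
    have "Inf C < x" "x < Sup C" using x by auto
    then obtain y1 y2 where "y1 \<in> C" "y1 < x" "y2 \<in> C" "x < y2"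
      using cInf_lessD[OF Cne] less_cSupD[OF Cne] by blast
    then show "x \<in> C" using interval_mem[OF Cint] by (metis less_imp_le)
  qed
  show sub2: "C \<subseteq> {Inf C..Sup C}"
  proof
    fix x assume x: "x \<in> C"
    show "x \<in> {Inf C..Sup C}" using cInf_lower[OF x bdd_below] cSup_upper[OF x bdd_above] by simp
  qed
  have "emeasure lborel C \<le> emeasure lborel {Inf C..Sup C}" using sub2 by (intro emeasure_mono) auto
  moreover have "emeasure lborel {Inf C<..<Sup C} \<le> emeasure lborel C"
    using sub1 Copen by (intro emeasure_mono) auto
  ultimately show "emeasure lborel C = ennreal (Sup C - Inf C)" using lt by simp
qed

lemma comps_countable:
  fixes U :: "real set"
  assumes U: "open U" shows "countable (components U)"
proof (rule countable_disjoint_open_subsets)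
  show "\<And>S. S \<in> components U \<Longrightarrow> open S" using U open_components by blast
  show "pairwise disjnt (components U)"
    using pairwise_disjoint_components[of U] unfolding pairwise_def disjnt_def by blast
qed



lemma lux_cheb:
  fixes g :: "real \<Rightarrow> ereal"
  assumes g1: "growth_function \<Phi>" and l: "l > 0"
    and int: "(\<integral>\<^sup>+ x. (if g x = \<infinity> then \<infinity> else ennreal (\<Phi> (real_of_ereal \<bar>g x\<bar> / l))) \<partial>lborel) \<le> 1"
    and S: "S \<in> sets lborel" and r: "r \<ge> 0" and gS: "\<And>x. x \<in> S \<Longrightarrow> g x \<ge> ereal r"
  shows "ennreal (\<Phi> (r / l)) * emeasure lborel S \<le> 1"
proof -
  have "ennreal (\<Phi> (r / l)) * emeasure lborel S = (\<integral>\<^sup>+ x. ennreal (\<Phi> (r / l)) * indicator S x \<partial>lborel)"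
    using S by (simp add: nn_integral_cmult_indicator)
  also have "\<dots> \<le> (\<integral>\<^sup>+ x. (if g x = \<infinity> then \<infinity> else ennreal (\<Phi> (real_of_ereal \<bar>g x\<bar> / l))) \<partial>lborel)"
  proof (intro nn_integral_mono)
    fix x
    show "ennreal (\<Phi> (r / l)) * indicator S x \<le> (if g x = \<infinity> then \<infinity> else ennreal (\<Phi> (real_of_ereal \<bar>g x\<bar> / l)))"
    proof (cases "x \<in> S")
      case False then show ?thesis by simp
    next
      case True
      then have ge: "g x \<ge> ereal r" by (rule gS)
      show ?thesis
      proof (cases "g x = \<infinity>")
        case True then show ?thesis by simp
      next
        case False
        then obtain v where v: "g x = ereal v" using ge by (cases "g x") auto
        then have "v \<ge> r" using ge by simp
        then have "\<Phi> (r / l) \<le> \<Phi> (v / l)" using r l by (intro gf_mono[OF g1]) (auto simp: divide_right_mono)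
        moreover have "real_of_ereal \<bar>g x\<bar> = v" using v \<open>v \<ge> r\<close> r by simp
        ultimately show ?thesis using False True by (simp add: ennreal_leI)
      qed
    qed
  qed
  also have "\<dots> \<le> 1" by (rule int)
  finally show ?thesis .
qed

lemma lux_set_upward:
  assumes "ereal a > lux_norm \<Phi> g"
  obtains l where "l > 0" "l < a"
    "(\<integral>\<^sup>+ x. (if g x = \<infinity> then \<infinity> else ennreal (\<Phi> (real_of_ereal \<bar>g x\<bar> / l))) \<partial>lborel) \<le> 1"
proof -
  from assms obtain y where "y \<in> {ereal l | l. l > 0 \<and>
      (\<integral>\<^sup>+ x. (if g x = \<infinity> then \<infinity> else ennreal (\<Phi> (real_of_ereal \<bar>g x\<bar> / l))) \<partial>lborel) \<le> 1}" "y < ereal a"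
    unfolding lux_norm_def by (meson Inf_less_iff)
  then show ?thesis using that by auto
qed

lemma ntm_ge:
  assumes "y > 0" "\<bar>t - x\<bar> < y"
  shows "nontangential_max f x \<ge> ereal (norm (f (Complex t y)))"
  unfolding nontangential_max_def
  by (rule SUP_upper2[where i="(t, y)"]) (use assms in auto)

lemma ntm_nonneg: "nontangential_max f x \<ge> 0"
proof -
  have "ereal (norm (f (Complex x 1))) \<le> nontangential_max f x" using ntm_ge[of 1 x x f] by simp
  moreover have "0 \<le> ereal (norm (f (Complex x 1)))" by simp
  ultimately show ?thesis by (rule order_trans[rotated])
qed

lemma lux_pos:
  assumes g1: "growth_function \<Phi>" and cv: "convex_on {0..} \<Phi>" and pos: "\<And>t. t > 0 \<Longrightarrow> \<Phi> t > 0"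
    and nz: "z0 \<in> upper_half_plane" "f z0 \<noteq> 0"
  shows "lux_norm \<Phi> (nontangential_max f) > 0"
proof -
  define x0 y0 c where "x0 = Re z0" "y0 = Im z0" "c = norm (f z0)"
  have y0: "y0 > 0" using nz unfolding upper_half_plane_def x0_y0_c_def by simp
  have c: "c > 0" using nz unfolding x0_y0_c_def by simp
  define T where "T = growth_inv \<Phi> (1 / (2*y0))"
  have T: "T \<ge> 0" "\<Phi> T = 1/(2*y0)" using growth_inv_prop[OF g1, of "1/(2*y0)"] y0 unfolding T_def by auto
  have Tpos: "T > 0" using T y0 gf_zero[OF g1] by (cases "T = 0") auto
  have "ereal (c / T) \<le> lux_norm \<Phi> (nontangential_max f)"
    unfolding lux_norm_def
  proof (rule Inf_greatest, clarify)
    fix l assume l: "l > (0::real)"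
      and int: "(\<integral>\<^sup>+ x. (if nontangential_max f x = \<infinity> then \<infinity> else ennreal (\<Phi> (real_of_ereal \<bar>nontangential_max f x\<bar> / l))) \<partial>lborel) \<le> 1"
    have ge: "nontangential_max f x \<ge> ereal c" if "x \<in> {x0 - y0<..<x0 + y0}" for x
    proof -
      have "Complex x0 y0 = z0" unfolding x0_y0_c_def by simp
      then show ?thesis using ntm_ge[of y0 x0 x f] y0 that unfolding x0_y0_c_def by (auto simp: abs_less_iff)
    qed
    have "ennreal (\<Phi> (c / l)) * emeasure lborel {x0 - y0<..<x0 + y0} \<le> 1"
      by (rule lux_cheb[OF g1 l int _ _ ge]) (use c in auto)
    then have "ennreal (\<Phi> (c / l)) * ennreal (2*y0) \<le> 1" using y0 by simp
    then have le: "\<Phi> (c / l) * (2*y0) \<le> 1"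
      using y0 by (simp add: ennreal_mult[symmetric] gf_nonneg[OF g1] c l less_imp_le del: ennreal_mult')
    show "ereal (c / T) \<le> ereal l"
    proof (rule ccontr)
      assume "\<not> ereal (c / T) \<le> ereal l"
      then have "l < c / T" by simp
      then have "T < c / l" using l Tpos by (simp add: field_simps)
      then have "\<Phi> T < \<Phi> (c / l)" using strict_mono_gf[OF g1 cv pos] T by blast
      then have "1/(2*y0) < \<Phi> (c / l)" using T by simp
      then have "1 < \<Phi> (c / l) * (2*y0)" using y0 by (simp add: field_simps)
      then show False using le by simp
    qed
  qed
  moreover have "c / T > 0" using c Tpos by simp
  ultimately show ?thesis by (meson ereal_less(2) less_le_trans)
qed



lemma uhp_open: "open upper_half_plane"
  unfolding upper_half_plane_def using open_halfspace_Im_gt[of 0] by simp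

lemma box_open:
  assumes "open C" shows "open (carleson_box C L)"
proof -
  have "carleson_box C L = (Re -` C) \<inter> {z. Im z > 0} \<inter> {z. Im z < L}"
    unfolding carleson_box_def by auto
  moreover have "open (Re -` C)" by (rule continuous_open_vimage[OF assms]) (rule isCont_Re[OF continuous_ident])
  ultimately show ?thesis using open_halfspace_Im_gt[of 0] open_halfspace_Im_lt[of L] by (metis open_Int)
qed

lemma box_sets:
  assumes sets: "sets \<mu> = sets (restrict_space borel upper_half_plane)" and "open C"
  shows "carleson_box C L \<in> sets \<mu>"
proof -
  have "upper_half_plane \<inter> space borel \<in> sets borel" using uhp_open by simp
  moreover have "carleson_box C L \<subseteq> upper_half_plane"
    unfolding carleson_box_def upper_half_plane_def by auto
  moreover have "carleson_box C L \<in> sets borel" using box_open[OF assms(2)] by simp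
  ultimately show ?thesis unfolding sets by (simp add: sets_restrict_space_iff)
qed

lemma Gratio:
  assumes g1: "growth_function P1" and cv: "convex_on {0..} P1" and pos1: "\<And>t. t > 0 \<Longrightarrow> P1 t > 0"
    and pos2: "\<And>t. t > 0 \<Longrightarrow> P2 t > 0"
    and mono12: "mono_on {0<..} (\<lambda>t. P2 t / P1 t)"
    and x: "0 < x" "x \<le> S"
  shows "1 / P2 (growth_inv P1 (1/x)) \<le> x * (1 / P2 (growth_inv P1 (1/S))) / S"
proof -
  define vx vS where "vx = growth_inv P1 (1/x)" "vS = growth_inv P1 (1/S)"
  have S: "S > 0" using x by simp
  have vx: "vx \<ge> 0" "P1 vx = 1/x" using growth_inv_prop[OF g1, of "1/x"] x unfolding vx_vS_def by auto
  have vS: "vS \<ge> 0" "P1 vS = 1/S" using growth_inv_prop[OF g1, of "1/S"] S unfolding vx_vS_def by auto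
  have vSp: "vS > 0" using vS S gf_zero[OF g1] by (cases "vS = 0") auto
  have "vS \<le> vx"
  proof (rule ccontr)
    assume "\<not> vS \<le> vx"
    then have "vx < vS" by simp
    then have "P1 vx < P1 vS" using strict_mono_gf[OF g1 cv pos1] vx(1) by blast
    then have "1/x < 1/S" using vx vS by simp
    then show False using x S by (simp add: divide_simps)
  qed
  then have "P2 vS / P1 vS \<le> P2 vx / P1 vx" using vSp by (intro mono_onD[OF mono12]) auto
  then have "P2 vS * S \<le> P2 vx * x" using vx vS by simp
  moreover have "P2 vS > 0" "P2 vx > 0" using pos2 vSp \<open>vS \<le> vx\<close> by auto
  ultimately show ?thesis unfolding vx_vS_def[symmetric] using x S
    by (simp add: divide_simps mult.commute)
qed



lemma a_to_b:
  fixes P1 P2 :: "real \<Rightarrow> real" and \<mu> :: "complex measure" and f :: "complex \<Rightarrow> complex"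
  assumes g1: "growth_function P1" and cv: "convex_on {0..} P1" and pos1: "\<And>t. t > 0 \<Longrightarrow> P1 t > 0"
    and U2: "class_U P2"
    and mono12: "mono_on {0<..} (\<lambda>t. P2 t / P1 t)"
    and sets: "sets \<mu> = sets (restrict_space borel upper_half_plane)"
    and C1: "C1 > 0"
    and H: "\<forall>a b I. a < b \<and> {a<..<b} \<subseteq> I \<and> I \<subseteq> {a..b} \<longrightarrow>
            emeasure \<mu> (carleson_box I (b - a)) \<le> ennreal (C1 / P2 (growth_inv P1 (1 / (b - a))))"
    and nz: "z0 \<in> upper_half_plane" "f z0 \<noteq> 0"
    and l: "l > 0"
  shows "ennreal (P2 l) * emeasure \<mu> {z\<in>upper_half_plane.
           ereal (norm (f z)) > ereal ((2 * max 1 C1) * l) * lux_norm P1 (nontangential_max f)} \<le> 1"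
proof -
  define C2 where "C2 = 2 * max 1 C1"
  have C2: "C2 > 0" unfolding C2_def by simp
  define F where "F = nontangential_max f"
  define N where "N = lux_norm P1 F"
  define E where "E = {z\<in>upper_half_plane. ereal (norm (f z)) > ereal (C2 * l) * N}"
  have pos2: "\<And>t. t > 0 \<Longrightarrow> P2 t > 0" using U_pos[OF U2] .
  have g2: "growth_function P2" using U_props[OF U2] by metis
  have Npos: "N > 0" unfolding N_def F_def by (rule lux_pos[where f=f, OF g1 cv pos1 nz])
  have "ennreal (P2 l) * emeasure \<mu> E \<le> 1"
  proof (cases "N = \<infinity>")
    case True
    then have "E = {}" unfolding E_def using C2 l by auto
    then show ?thesis by simp
  next
    case False
    then obtain n where n: "N = ereal n" "n > 0" using Npos by (cases N) auto
    define lam where "lam = C2 * l * n"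
    define u where "u = C2 * l / 2"
    have lam: "lam > 0" "u > 0" unfolding lam_def u_def using C2 l n by auto
    obtain l2 where l2: "l2 > 0" "l2 < 2 * n"
      "(\<integral>\<^sup>+ x. (if F x = \<infinity> then \<infinity> else ennreal (P1 (real_of_ereal \<bar>F x\<bar> / l2))) \<partial>lborel) \<le> 1"
      using lux_set_upward[where a="2*n" and \<Phi>=P1 and g=F] n unfolding N_def by auto
    define U where "U = {x. F x > ereal lam}"
    have U_eq: "U = \<Union> {{t - y<..<t + y} | t y. y > 0 \<and> norm (f (Complex t y)) > lam}"
    proof
      show "U \<subseteq> \<Union> {{t - y<..<t + y} | t y. y > 0 \<and> norm (f (Complex t y)) > lam}"
      proof
        fix x assume "x \<in> U"
        then have "ereal lam < (SUP p\<in>{(t, y). y > 0 \<and> \<bar>t - x\<bar> < y}. ereal (norm (f (Complex (fst p) (snd p)))))"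
          unfolding U_def F_def nontangential_max_def by simp
        then obtain t y where ty: "y > 0" "\<bar>t - x\<bar> < y" "ereal lam < ereal (norm (f (Complex t y)))"
          by (auto simp: less_SUP_iff)
        have "{t - y<..<t + y} \<in> {{t - y<..<t + y} | t y. y > 0 \<and> norm (f (Complex t y)) > lam}"
          using ty by auto
        moreover have "x \<in> {t - y<..<t + y}" using ty(2) by (auto simp: abs_less_iff)
        ultimately show "x \<in> \<Union> {{t - y<..<t + y} | t y. y > 0 \<and> norm (f (Complex t y)) > lam}"
          by blast
      qed
      show "\<Union> {{t - y<..<t + y} | t y. y > 0 \<and> norm (f (Complex t y)) > lam} \<subseteq> U"
      proof
        fix x assume "x \<in> \<Union> {{t - y<..<t + y} | t y. y > 0 \<and> norm (f (Complex t y)) > lam}"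
        then obtain t y where ty: "y > 0" "norm (f (Complex t y)) > lam" "x \<in> {t - y<..<t + y}" by auto
        then have "\<bar>t - x\<bar> < y" by (auto simp: abs_less_iff)
        then have "F x \<ge> ereal (norm (f (Complex t y)))" unfolding F_def using ntm_ge ty(1) by blast
        moreover have "ereal lam < ereal (norm (f (Complex t y)))" using ty(2) by simp
        ultimately show "x \<in> U" unfolding U_def using less_le_trans by blast
      qed
    qed
    have Uopen: "open U" unfolding U_eq by (rule open_Union) auto
    have "ennreal (P1 (lam / l2)) * emeasure lborel U \<le> 1"
      by (rule lux_cheb[OF g1 l2(1) l2(3)]) (use Uopen lam in \<open>auto simp: U_def less_imp_le\<close>)
    moreover have "P1 u \<le> P1 (lam / l2)"
    proof (rule gf_mono[OF g1])
      show "0 \<le> u" using lam by simp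
      have "lam / (2*n) \<le> lam / l2" using l2 lam by (intro divide_left_mono) auto
      then show "u \<le> lam / l2" unfolding u_def lam_def using n by (simp add: field_simps)
    qed
    ultimately have Ucheb: "ennreal (P1 u) * emeasure lborel U \<le> 1"
      using mult_right_mono[OF ennreal_leI[OF \<open>P1 u \<le> P1 (lam / l2)\<close>], of "emeasure lborel U"]
      by simp
    have P1u: "P1 u > 0" using pos1 lam by simp
    have Ufin: "emeasure lborel U < \<infinity>"
    proof (rule ccontr)
      assume "\<not> emeasure lborel U < \<infinity>"
      then have "emeasure lborel U = \<infinity>" using less_top[of "emeasure lborel U"] by simp
      then have "ennreal (P1 u) * emeasure lborel U = \<infinity>" using P1u by (simp add: ennreal_mult_top)
      then show False using Ucheb by (simp add: top_unique)
    qed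
    define S where "S = enn2real (emeasure lborel U)"
    have S: "emeasure lborel U = ennreal S" "S \<ge> 0" unfolding S_def using Ufin
      by (auto simp: less_top[symmetric] ennreal_enn2real)
    have "ennreal (P1 u * S) \<le> 1" using Ucheb S P1u by (simp add: ennreal_mult)
    then have PS: "P1 u * S \<le> 1" by (simp add: ennreal_le_1)
    show ?thesis
    proof (cases "E = {}")
      case True then show ?thesis by simp
    next
      case False
      then obtain z where z: "z \<in> E" by auto
      have Nlam: "ereal (C2 * l) * N = ereal lam" unfolding lam_def using n by simp
      have JU: "{Re w - Im w<..<Re w + Im w} \<subseteq> U" if w: "w \<in> E" for w
      proof
        fix s assume s: "s \<in> {Re w - Im w<..<Re w + Im w}"
        have wy: "Im w > 0" using w unfolding E_def upper_half_plane_def by simp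
        have "\<bar>Re w - s\<bar> < Im w" using s by (auto simp: abs_less_iff)
        then have "F s \<ge> ereal (norm (f (Complex (Re w) (Im w))))" unfolding F_def using ntm_ge wy by blast
        then have "F s \<ge> ereal (norm (f w))" by simp
        moreover have "ereal (norm (f w)) > ereal lam" using w Nlam unfolding E_def by simp
        ultimately show "s \<in> U" unfolding U_def using less_le_trans by blast
      qed
      have zy: "Im z > 0" using z unfolding E_def upper_half_plane_def by simp
      have "emeasure lborel {Re z - Im z<..<Re z + Im z} \<le> emeasure lborel U"
        using JU[OF z] Uopen by (intro emeasure_mono) auto
      then have "ennreal (2 * Im z) \<le> ennreal S" using zy S by simp
      then have Spos: "S > 0" using zy S by (simp add: ennreal_le_iff)
      define comps where "comps = components U"
      define box where "box C = carleson_box C (Sup C - Inf C)" for C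
      have cnt: "countable comps" unfolding comps_def by (rule comps_countable[OF Uopen])
      have copen: "open C" if "C \<in> comps" for C using that unfolding comps_def using open_components[OF Uopen] by blast
      have bsets: "box C \<in> sets \<mu>" if "C \<in> comps" for C
        unfolding box_def by (rule box_sets[OF sets copen[OF that]])
      have disjC: "disjoint_family_on (\<lambda>C. C) comps"
        unfolding disjoint_family_on_def comps_def using components_nonoverlap by blast
      have disjB: "disjoint_family_on box comps"
        using disjC unfolding disjoint_family_on_def box_def carleson_box_def by blast
      have cover: "E \<subseteq> \<Union> (box ` comps)"
      proof
        fix w assume w: "w \<in> E"
        define C where "C = connected_component_set U (Re w)"
        have wy: "Im w > 0" using w unfolding E_def upper_half_plane_def by simp
        have xU: "Re w \<in> U" using JU[OF w] wy by auto
        have Cc: "C \<in> comps" unfolding C_def comps_def using xU by (rule componentsI)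
        have JC: "{Re w - Im w<..<Re w + Im w} \<subseteq> C"
          unfolding C_def by (rule connected_component_maximal) (use wy JU[OF w] in auto)
        have ci: "C \<subseteq> {Inf C..Sup C}" using comp_interval(3)[OF Uopen Ufin] Cc unfolding comps_def by blast
        have "Re w - 3/4 * Im w \<in> C" "Re w + 3/4 * Im w \<in> C" "Re w \<in> C" using JC wy by auto
        then have "Inf C \<le> Re w - 3/4 * Im w" "Re w + 3/4 * Im w \<le> Sup C" using ci by auto
        then have "w \<in> box C" unfolding box_def carleson_box_def using wy \<open>Re w \<in> C\<close> by auto
        then show "w \<in> \<Union> (box ` comps)" using Cc by blast
      qed
      define G where "G x = 1 / P2 (growth_inv P1 (1 / x))" for x
      define K where "K = C1 * G S / S"
      define vS where "vS = growth_inv P1 (1/S)"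
      have vS: "vS \<ge> 0" "P1 vS = 1/S" using growth_inv_prop[OF g1, of "1/S"] Spos unfolding vS_def by auto
      have vSp: "vS > 0" using vS Spos gf_zero[OF g1] by (cases "vS = 0") auto
      have GS: "G S > 0" unfolding G_def vS_def[symmetric] using pos2[OF vSp] by simp
      have K: "K \<ge> 0" unfolding K_def using GS Spos C1 by simp
      have each: "emeasure \<mu> (box C) \<le> ennreal K * emeasure lborel C" if C: "C \<in> comps" for C
      proof -
        have ab: "Inf C < Sup C" "{Inf C<..<Sup C} \<subseteq> C" "C \<subseteq> {Inf C..Sup C}"
          "emeasure lborel C = ennreal (Sup C - Inf C)"
          using comp_interval[OF Uopen Ufin] C unfolding comps_def by auto
        have "emeasure \<mu> (box C) \<le> ennreal (C1 / P2 (growth_inv P1 (1 / (Sup C - Inf C))))"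
          unfolding box_def using H ab by blast
        also have "C1 / P2 (growth_inv P1 (1 / (Sup C - Inf C))) = C1 * G (Sup C - Inf C)"
          unfolding G_def by simp
        also have "C1 * G (Sup C - Inf C) \<le> K * (Sup C - Inf C)"
        proof -
          have "emeasure lborel C \<le> emeasure lborel U"
            using in_components_subset[of C U] C Uopen unfolding comps_def by (intro emeasure_mono) auto
          then have le: "Sup C - Inf C \<le> S" using ab S by (simp add: ennreal_le_iff)
          have "G (Sup C - Inf C) \<le> (Sup C - Inf C) * G S / S"
            unfolding G_def by (rule Gratio[OF g1 cv pos1 pos2 mono12]) (use ab le in auto)
          then have "C1 * G (Sup C - Inf C) \<le> C1 * ((Sup C - Inf C) * G S / S)"
            using C1 by (intro mult_left_mono) auto
          also have "\<dots> = K * (Sup C - Inf C)" unfolding K_def by (simp add: field_simps)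
          finally show ?thesis .
        qed
        also have "ennreal (K * (Sup C - Inf C)) = ennreal K * emeasure lborel C"
          using ab K by (simp add: ennreal_mult)
        finally show ?thesis by (simp add: ennreal_leI)
      qed
      have "emeasure \<mu> E \<le> emeasure \<mu> (\<Union> (box ` comps))"
        using cover bsets cnt by (intro emeasure_mono) (auto intro: sets.countable_UN')
      also have "\<dots> = (\<integral>\<^sup>+C. emeasure \<mu> (box C) \<partial>count_space comps)"
        by (rule emeasure_UN_countable[OF bsets cnt disjB])
      also have "\<dots> \<le> (\<integral>\<^sup>+C. ennreal K * emeasure lborel C \<partial>count_space comps)"
        using each by (intro nn_integral_mono) auto
      also have "\<dots> = ennreal K * (\<integral>\<^sup>+C. emeasure lborel C \<partial>count_space comps)"
        by (rule nn_integral_cmult) auto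
      also have "(\<integral>\<^sup>+C. emeasure lborel C \<partial>count_space comps) = emeasure lborel (\<Union> ((\<lambda>C. C) ` comps))"
        by (rule emeasure_UN_countable[symmetric]) (use copen cnt disjC in auto)
      also have "\<Union> ((\<lambda>C. C) ` comps) = U" unfolding comps_def by simp
      finally have muE: "emeasure \<mu> E \<le> ennreal (C1 * G S)" using S Spos K unfolding K_def
        by (simp add: ennreal_mult[symmetric])
      have final: "P2 l * (C1 * G S) \<le> 1"
      proof -
        have "u \<le> vS"
        proof (rule ccontr)
          assume "\<not> u \<le> vS"
          then have "vS < u" by simp
          then have "P1 vS < P1 u" using strict_mono_gf[OF g1 cv pos1] vS(1) by blast
          then have "1 < P1 u * S" using vS Spos by (simp add: field_simps)
          then show False using PS by simp
        qed
        then have "P2 u \<le> P2 vS" using gf_mono[OF g2] lam by simp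
        moreover have "max 1 C1 * P2 l \<le> P2 (l * max 1 C1)" by (rule U_lower[OF U2 l]) simp
        moreover have "l * max 1 C1 = u" unfolding u_def C2_def by simp
        ultimately have le: "max 1 C1 * P2 l \<le> P2 vS" by simp
        have p: "P2 l > 0" "P2 vS > 0" using pos2 l vSp by auto
        have "C1 * P2 l \<le> P2 vS" using le p by (meson max.cobounded2 mult_right_mono less_imp_le order_trans)
        then show ?thesis unfolding G_def vS_def[symmetric] using p by (simp add: field_simps)
      qed
      have "ennreal (P2 l) * emeasure \<mu> E \<le> ennreal (P2 l) * ennreal (C1 * G S)"
        by (rule mult_left_mono[OF muE]) simp
      also have "\<dots> = ennreal (P2 l * (C1 * G S))" using pos2[OF l] GS C1 by (simp add: ennreal_mult)
      also have "\<dots> \<le> 1" using final by (simp add: ennreal_le_1)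
      finally show ?thesis .
    qed
  qed
  then show ?thesis unfolding E_def C2_def N_def F_def .
qed



lemma lux_bound16:
  fixes g :: "real \<Rightarrow> ereal"
  assumes g1: "growth_function P1" and cv: "convex_on {0..} P1"
    and L: "L > 0" and A: "A \<ge> 0" "P1 A = 1 / L"
    and gb: "\<And>x. 0 \<le> g x \<and> g x \<le> ereal (4 * A * (L\<^sup>2 / ((x - x0)\<^sup>2 + L\<^sup>2)))"
  shows "lux_norm P1 g \<le> 16"
proof -
  define k where "k x = L\<^sup>2 / ((x - x0)\<^sup>2 + L\<^sup>2)" for x
  have k: "0 \<le> k x" "k x \<le> 1" for x
  proof -
    have p: "(x - x0)\<^sup>2 + L\<^sup>2 > 0" using L by (simp add: add_nonneg_pos)
    show "0 \<le> k x" unfolding k_def using p by simp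
    show "k x \<le> 1" unfolding k_def using p by (simp add: divide_le_eq_1)
  qed
  have pt: "(if g x = \<infinity> then \<infinity> else ennreal (P1 (real_of_ereal \<bar>g x\<bar> / 16)))
      \<le> ennreal (1 / (4 * L) * k x)" for x
  proof -
    obtain v where v: "g x = ereal v" "0 \<le> v" "v \<le> 4 * A * k x"
      using gb[of x] unfolding k_def by (cases "g x") auto
    have "real_of_ereal \<bar>g x\<bar> / 16 = v / 16" using v by simp
    moreover have "P1 (v / 16) \<le> P1 ((k x / 4) * A)"
      using v A by (intro gf_mono[OF g1]) (auto simp: field_simps)
    moreover have "P1 ((k x / 4) * A) \<le> (k x / 4) * P1 A"
      by (rule convex_scale[OF cv gf_zero[OF g1]]) (use k[of x] A in auto)
    moreover have "(k x / 4) * P1 A = 1 / (4 * L) * k x" using A L by simp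
    ultimately have "P1 (real_of_ereal \<bar>g x\<bar> / 16) \<le> 1 / (4 * L) * k x" by (metis order_trans)
    then show ?thesis using v by (simp add: ennreal_leI)
  qed
  have "(\<integral>\<^sup>+ x. (if g x = \<infinity> then \<infinity> else ennreal (P1 (real_of_ereal \<bar>g x\<bar> / 16))) \<partial>lborel)
      \<le> (\<integral>\<^sup>+ x. ennreal (1 / (4 * L)) * ennreal (k x) \<partial>lborel)"
  proof (intro nn_integral_mono)
    fix x
    have "ennreal (1 / (4 * L) * k x) = ennreal (1 / (4 * L)) * ennreal (k x)"
      using L k[of x] by (intro ennreal_mult) auto
    then show "(if g x = \<infinity> then \<infinity> else ennreal (P1 (real_of_ereal \<bar>g x\<bar> / 16)))
      \<le> ennreal (1 / (4 * L)) * ennreal (k x)" using pt[of x] by simp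
  qed
  also have "\<dots> = ennreal (1 / (4 * L)) * (\<integral>\<^sup>+ x. ennreal (k x) \<partial>lborel)"
    by (rule nn_integral_cmult) (simp add: k_def)
  also have "\<dots> \<le> ennreal (1 / (4 * L)) * ennreal (pi * L)"
    unfolding k_def by (intro mult_left_mono cauchy_scaled L) simp
  also have "\<dots> = ennreal (pi / 4)" using L by (simp add: ennreal_mult[symmetric])
  also have "\<dots> \<le> 1" using pi_less_4 by (simp add: ennreal_le_1)
  finally have int: "(\<integral>\<^sup>+ x. (if g x = \<infinity> then \<infinity> else ennreal (P1 (real_of_ereal \<bar>g x\<bar> / 16))) \<partial>lborel) \<le> 1" .
  show ?thesis unfolding lux_norm_def
    by (rule Inf_lower) (use int in \<open>auto intro!: exI[of _ 16]\<close>)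
qed



definition tf :: "real \<Rightarrow> real \<Rightarrow> real \<Rightarrow> complex \<Rightarrow> complex" where
  "tf A L x0 z = complex_of_real (A * L\<^sup>2) / (z - Complex x0 (- L))^2"

lemma tf_norm:
  assumes "A \<ge> 0"
  shows "norm (tf A L x0 z) = A * L\<^sup>2 / ((Re z - x0)\<^sup>2 + (Im z + L)\<^sup>2)"
proof -
  have "norm ((z - Complex x0 (- L))^2) = (Re z - x0)\<^sup>2 + (Im z + L)\<^sup>2"
    by (simp add: norm_power cmod_power2)
  moreover have "norm (complex_of_real (A * L\<^sup>2)) = A * L\<^sup>2"
    using assms by (simp only: norm_of_real) simp
  ultimately show ?thesis unfolding tf_def norm_divide by simp
qed

lemma lin_aux: "(P::real) \<le> 2*Q + 2*R \<Longrightarrow> R \<le> Y \<Longrightarrow> Y + M \<le> T \<Longrightarrow> 0 \<le> Q \<Longrightarrow> 0 \<le> M \<Longrightarrow> 0 \<le> Y \<Longrightarrow> P + M \<le> 4*(Q+T)"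
  by (smt (verit))

lemma ineq1:
  fixes d e y L :: real assumes "y > 0" "L > 0" "\<bar>e - d\<bar> < y"
  shows "d\<^sup>2 + L\<^sup>2 \<le> 4 * (e\<^sup>2 + (y + L)\<^sup>2)"
proof -
  have "d\<^sup>2 \<le> 2 * e\<^sup>2 + 2 * (d - e)\<^sup>2" using zero_le_power2[of "2*e - d"] by (simp add: power2_eq_square algebra_simps)
  moreover have "(d - e)\<^sup>2 \<le> y\<^sup>2" using assms by (simp add: abs_le_square_iff[symmetric] abs_minus_commute less_imp_le)
  moreover have "y\<^sup>2 + L\<^sup>2 \<le> (y + L)\<^sup>2" using assms by (simp add: power2_eq_square algebra_simps)
  ultimately show ?thesis using zero_le_power2[of e] zero_le_power2[of L] zero_le_power2[of y] by (rule lin_aux)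
qed

lemma tf_ntm:
  assumes A: "A \<ge> 0" and L: "L > 0"
  shows "nontangential_max (tf A L x0) x \<le> ereal (4 * A * (L\<^sup>2 / ((x - x0)\<^sup>2 + L\<^sup>2)))"
  unfolding nontangential_max_def
proof (rule SUP_least, clarify)
  fix t y :: real assume y: "y > 0" "\<bar>t - x\<bar> < y"
  have D2: "(x - x0)\<^sup>2 + L\<^sup>2 > 0" using L by (simp add: add_nonneg_pos)
  have D1: "(t - x0)\<^sup>2 + (y + L)\<^sup>2 > 0" using L y by (simp add: add_nonneg_pos)
  have le: "(x - x0)\<^sup>2 + L\<^sup>2 \<le> 4 * ((t - x0)\<^sup>2 + (y + L)\<^sup>2)"
    using ineq1[of y L "t - x0" "x - x0"] y L by simp
  have "A * L\<^sup>2 / ((t - x0)\<^sup>2 + (y + L)\<^sup>2) = 4 * A * L\<^sup>2 / (4 * ((t - x0)\<^sup>2 + (y + L)\<^sup>2))"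
    by (simp only: mult.assoc mult_divide_mult_cancel_left_if) simp
  also have "\<dots> \<le> 4 * A * L\<^sup>2 / ((x - x0)\<^sup>2 + L\<^sup>2)"
    using A D2 le by (intro divide_left_mono) auto
  finally show "ereal (norm (tf A L x0 (Complex (fst (t, y)) (snd (t, y))))) \<le> ereal (4 * A * (L\<^sup>2 / ((x - x0)\<^sup>2 + L\<^sup>2)))"
    using tf_norm[OF A] by simp
qed

lemma tf_line:
  assumes A: "A \<ge> 0" and L: "L > 0" and y: "Im z \<ge> 0"
  shows "norm (tf A L x0 z) \<le> 4 * A * (L\<^sup>2 / ((Re z - x0)\<^sup>2 + L\<^sup>2))"
proof -
  have D2: "(Re z - x0)\<^sup>2 + L\<^sup>2 > 0" using L by (simp add: add_nonneg_pos)
  have "L\<^sup>2 \<le> (Im z + L)\<^sup>2" using y L by (simp add: power_mono)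
  then have "A * L\<^sup>2 / ((Re z - x0)\<^sup>2 + (Im z + L)\<^sup>2) \<le> A * L\<^sup>2 / ((Re z - x0)\<^sup>2 + L\<^sup>2)"
    using A D2 by (intro divide_left_mono) auto
  also have "\<dots> \<le> 4 * A * L\<^sup>2 / ((Re z - x0)\<^sup>2 + L\<^sup>2)"
    using A D2 by (intro divide_right_mono) auto
  finally show ?thesis using tf_norm[OF A] by simp
qed

lemma tf_box:
  assumes A: "A \<ge> 0" and L: "L > 0" and z: "\<bar>Re z - x0\<bar> \<le> L / 2" "0 < Im z" "Im z < L"
  shows "norm (tf A L x0 z) \<ge> 4 * A / 17"
proof -
  have "(Re z - x0)\<^sup>2 \<le> (L/2)\<^sup>2" using z by (simp add: abs_le_square_iff[symmetric])
  moreover have "(Im z + L)\<^sup>2 \<le> (2*L)\<^sup>2" using z by (intro power_mono) auto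
  ultimately have D: "(Re z - x0)\<^sup>2 + (Im z + L)\<^sup>2 \<le> 17/4 * L\<^sup>2" by (simp add: power2_eq_square)
  have Dp: "(Re z - x0)\<^sup>2 + (Im z + L)\<^sup>2 > 0" using L z by (simp add: add_nonneg_pos)
  have "4 * A / 17 = A * L\<^sup>2 / (17/4 * L\<^sup>2)" using L by simp
  also have "\<dots> \<le> A * L\<^sup>2 / ((Re z - x0)\<^sup>2 + (Im z + L)\<^sup>2)"
    using A D Dp L by (intro divide_left_mono) auto
  finally show ?thesis using tf_norm[OF A] by simp
qed

lemma tf_holo:
  assumes L: "L > 0" shows "tf A L x0 holomorphic_on upper_half_plane"
proof -
  have "z - Complex x0 (- L) \<noteq> 0" if "z \<in> upper_half_plane" for z
  proof
    assume "z - Complex x0 (- L) = 0"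
    then have "Im z = - L" by (metis complex.sel(2) eq_iff_diff_eq_0)
    then show False using that L unfolding upper_half_plane_def by simp
  qed
  then show ?thesis unfolding tf_def by (auto intro!: holomorphic_intros)
qed

lemma tf_meas: "tf A L x0 \<in> borel_measurable borel"
  unfolding tf_def by measurable



lemma b_to_a:
  fixes P1 P2 :: "real \<Rightarrow> real" and \<mu> :: "complex measure"
  assumes g1: "growth_function P1" and cv: "convex_on {0..} P1" and pos1: "\<And>t. t > 0 \<Longrightarrow> P1 t > 0"
    and U2: "class_U P2"
    and sets: "sets \<mu> = sets (restrict_space borel upper_half_plane)"
    and C2: "C2 > 0"
    and Hb: "\<forall>f\<in>hardy_orlicz P1. (\<exists>z\<in>upper_half_plane. f z \<noteq> 0) \<longrightarrow>
            (SUP l\<in>{0<..}. ennreal (P2 l) *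
               emeasure \<mu> {z\<in>upper_half_plane.
                  ereal (norm (f z)) > ereal (C2 * l) * lux_norm P1 (nontangential_max f)}) \<le> 1"
  shows "\<exists>C1>0. \<forall>a b I. a < b \<and> {a<..<b} \<subseteq> I \<and> I \<subseteq> {a..b} \<longrightarrow>
            emeasure \<mu> (carleson_box I (b - a))
              \<le> ennreal (C1 / P2 (growth_inv P1 (1 / (b - a))))"
proof -
  obtain Cq q where Cq: "Cq > 0" "q \<ge> 1" "\<And>s t. s > 0 \<Longrightarrow> t \<ge> 1 \<Longrightarrow> P2 (s*t) \<le> Cq * t powr q * P2 s"
    and g2: "growth_function P2" using U_props[OF U2] by metis
  have pos2: "\<And>t. t > 0 \<Longrightarrow> P2 t > 0" using U_pos[OF U2] .
  define tt where "tt = max 1 (80 * C2)"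
  have tt: "tt \<ge> 1" "tt \<ge> 80 * C2" "tt > 0" unfolding tt_def by auto
  define C1 where "C1 = Cq * tt powr q"
  have C1: "C1 > 0" unfolding C1_def using Cq tt by simp
  have "\<forall>a b I. a < b \<and> {a<..<b} \<subseteq> I \<and> I \<subseteq> {a..b} \<longrightarrow>
            emeasure \<mu> (carleson_box I (b - a)) \<le> ennreal (C1 / P2 (growth_inv P1 (1 / (b - a))))"
  proof (intro allI impI, elim conjE)
    fix a b :: real and I :: "real set"
    assume ab: "a < b" and I1: "{a<..<b} \<subseteq> I" and I2: "I \<subseteq> {a..b}"
    define L where "L = b - a"
    define x0 where "x0 = (a + b) / 2"
    define A where "A = growth_inv P1 (1 / L)"
    have L: "L > 0" unfolding L_def using ab by simp
    have A: "A \<ge> 0" "P1 A = 1 / L" using growth_inv_prop[OF g1, of "1/L"] L unfolding A_def by auto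
    have Ap: "A > 0" using A L gf_zero[OF g1] by (cases "A = 0") auto
    define f where "f = tf A L x0"
    define N where "N = lux_norm P1 (nontangential_max f)"
    have gb: "0 \<le> nontangential_max f x \<and> nontangential_max f x \<le> ereal (4 * A * (L\<^sup>2 / ((x - x0)\<^sup>2 + L\<^sup>2)))" for x
      using ntm_nonneg[of f x] tf_ntm[OF A(1) L, of x0 x] unfolding f_def by simp
    have N16: "N \<le> 16" unfolding N_def by (rule lux_bound16[OF g1 cv L A(1) A(2) gb])
    have N0: "N \<ge> 0" unfolding N_def lux_norm_def by (rule Inf_greatest) auto
    have fH: "f \<in> hardy_orlicz P1"
    proof -
      have "lux P1 (\<lambda>x. f (complex_of_real x + \<i> * complex_of_real y)) \<le> 16" if y: "y \<in> {0<..}" for y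
      proof -
        have gb2: "0 \<le> ereal (norm (f (complex_of_real x + \<i> * complex_of_real y))) \<and>
            ereal (norm (f (complex_of_real x + \<i> * complex_of_real y))) \<le> ereal (4 * A * (L\<^sup>2 / ((x - x0)\<^sup>2 + L\<^sup>2)))" for x
          using tf_line[OF A(1) L, of "complex_of_real x + \<i> * complex_of_real y" x0] y unfolding f_def by simp
        show ?thesis unfolding lux_def by (rule lux_bound16[OF g1 cv L A(1) A(2) gb2])
      qed
      then have "(SUP y\<in>{0<..}. lux P1 (\<lambda>x. f (complex_of_real x + \<i> * complex_of_real y))) \<le> 16"
        by (rule SUP_least)
      then have "(SUP y\<in>{0<..}. lux P1 (\<lambda>x. f (complex_of_real x + \<i> * complex_of_real y))) < \<infinity>"
        by (rule le_less_trans) simp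
      moreover have "f holomorphic_on upper_half_plane" unfolding f_def by (rule tf_holo[OF L])
      ultimately show ?thesis unfolding hardy_orlicz_def by simp
    qed
    have fnz: "\<exists>z\<in>upper_half_plane. f z \<noteq> 0"
    proof
      show "\<i> \<in> upper_half_plane" unfolding upper_half_plane_def by simp
      have D: "(Re \<i> - x0)\<^sup>2 + (Im \<i> + L)\<^sup>2 > 0" using L by (simp add: add_nonneg_pos)
      have "norm (f \<i>) > 0" unfolding f_def tf_norm[OF A(1)] using Ap L D by simp
      then show "f \<i> \<noteq> 0" by auto
    qed
    define l where "l = A / tt"
    have l: "l > 0" unfolding l_def using Ap tt by simp
    define T where "T = {z\<in>upper_half_plane. ereal (norm (f z)) > ereal (C2 * l) * N}"
    have Tsets: "T \<in> sets \<mu>"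
    proof -
      have fm: "f \<in> borel_measurable borel" unfolding f_def by (rule tf_meas)
      have "{z. ereal (C2 * l) * N < ereal (norm (f z))} \<in> sets borel" using fm by measurable
      moreover have "upper_half_plane \<in> sets borel" using uhp_open by simp
      moreover have "T = upper_half_plane \<inter> {z. ereal (C2 * l) * N < ereal (norm (f z))}"
        unfolding T_def by auto
      ultimately have "T \<in> sets borel" by (metis sets.Int)
      moreover have "upper_half_plane \<inter> space borel \<in> sets borel" using uhp_open by simp
      moreover have "T \<subseteq> upper_half_plane" unfolding T_def by auto
      ultimately show ?thesis unfolding sets by (simp add: sets_restrict_space_iff)
    qed
    have boxT: "carleson_box I L \<subseteq> T"
    proof
      fix z assume z: "z \<in> carleson_box I L"
      then have zz: "Re z \<in> {a..b}" "0 < Im z" "Im z < L" using I2 unfolding carleson_box_def by auto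
      then have "\<bar>Re z - x0\<bar> \<le> L / 2" unfolding x0_def L_def abs_le_iff by (auto simp: field_simps)
      then have fz: "norm (f z) \<ge> 4 * A / 17" unfolding f_def using tf_box[OF A(1) L] zz by blast
      have "ereal (C2 * l) * N \<le> ereal (C2 * l) * 16"
        using N16 C2 l by (intro ereal_mult_left_mono) auto
      also have "\<dots> = ereal (16 * C2 * l)" by simp
      also have "16 * C2 * l \<le> A / 5"
      proof -
        have "16 * C2 * l = 16 * C2 * A / tt" unfolding l_def by simp
        also have "\<dots> \<le> 16 * C2 * A / (80 * C2)" using C2 Ap tt by (intro divide_left_mono) auto
        also have "\<dots> = A / 5" using C2 by simp
        finally show ?thesis .
      qed
      then have "ereal (16 * C2 * l) < ereal (norm (f z))" using fz Ap by simp
      finally have "ereal (C2 * l) * N < ereal (norm (f z))" .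
      moreover have "z \<in> upper_half_plane" using zz unfolding upper_half_plane_def by simp
      ultimately show "z \<in> T" unfolding T_def by simp
    qed
    have "ennreal (P2 l) * emeasure \<mu> T \<le> 1"
    proof -
      have "ennreal (P2 l) * emeasure \<mu> T \<le> (SUP l\<in>{0<..}. ennreal (P2 l) *
               emeasure \<mu> {z\<in>upper_half_plane.
                  ereal (norm (f z)) > ereal (C2 * l) * lux_norm P1 (nontangential_max f)})"
        unfolding T_def N_def by (rule SUP_upper2[where i=l]) (use l in auto)
      also have "\<dots> \<le> 1" using Hb fH fnz by blast
      finally show ?thesis .
    qed
    then have m0: "ennreal (P2 l) * emeasure \<mu> (carleson_box I L) \<le> 1"
      using mult_left_mono[OF emeasure_mono[OF boxT Tsets], of "ennreal (P2 l)"] by simp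
    have m1: "emeasure \<mu> (carleson_box I L) \<le> ennreal (1 / P2 l)"
    proof -
      have p: "P2 l > 0" using pos2[OF l] .
      have "emeasure \<mu> (carleson_box I L) = ennreal (1 / P2 l) * (ennreal (P2 l) * emeasure \<mu> (carleson_box I L))"
        using p by (simp add: mult.assoc[symmetric] ennreal_mult[symmetric])
      also have "\<dots> \<le> ennreal (1 / P2 l) * 1" by (rule mult_left_mono[OF m0]) simp
      finally show ?thesis by simp
    qed
    have "P2 A \<le> Cq * tt powr q * P2 l"
      using Cq(3)[OF l tt(1)] unfolding l_def using tt by simp
    then have "1 / P2 l \<le> C1 / P2 A" unfolding C1_def using pos2[OF l] pos2[OF Ap]
      by (simp add: field_simps)
    then have "emeasure \<mu> (carleson_box I L) \<le> ennreal (C1 / P2 A)"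
      by (rule order_trans[OF m1 ennreal_leI])
    then show "emeasure \<mu> (carleson_box I (b - a)) \<le> ennreal (C1 / P2 (growth_inv P1 (1 / (b - a))))"
      unfolding L_def A_def .
  qed
  then show ?thesis using C1 by blast
qed


theorem theorem7p1:
  fixes \<Phi>1 \<Phi>2 :: "real \<Rightarrow> real" and \<mu> :: "complex measure"
  assumes "growth_function \<Phi>1" "convex_on {0..} \<Phi>1" "C1_on_nonneg \<Phi>1"
    and "growth_function \<Phi>2" "convex_on {0..} \<Phi>2" "C1_on_nonneg \<Phi>2"
    and "class_U \<Phi>2"
    and "nabla2 \<Phi>1"
    and "mono_on {0<..} (\<lambda>t. \<Phi>2 t / \<Phi>1 t)"
    and "sets \<mu> = sets (restrict_space borel upper_half_plane)"
  shows "(\<exists>C1>0. \<forall>a b I. a < b \<and> {a<..<b} \<subseteq> I \<and> I \<subseteq> {a..b} \<longrightarrow>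
            emeasure \<mu> (carleson_box I (b - a))
              \<le> ennreal (C1 / \<Phi>2 (growth_inv \<Phi>1 (1 / (b - a)))))
     \<longleftrightarrow>
     (\<exists>C2>0. \<forall>f\<in>hardy_orlicz \<Phi>1. (\<exists>z\<in>upper_half_plane. f z \<noteq> 0) \<longrightarrow>
            (SUP l\<in>{0<..}. ennreal (\<Phi>2 l) *
               emeasure \<mu> {z\<in>upper_half_plane.
                  ereal (norm (f z)) > ereal (C2 * l) * lux_norm \<Phi>1 (nontangential_max f)}) \<le> 1)"
  proof -
  have pos1: "\<And>t. t > 0 \<Longrightarrow> \<Phi>1 t > 0" using gf_pos_nabla assms(1,8) by blast
  show ?thesis
  proof
    assume "\<exists>C1>0. \<forall>a b I. a < b \<and> {a<..<b} \<subseteq> I \<and> I \<subseteq> {a..b} \<longrightarrow>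
            emeasure \<mu> (carleson_box I (b - a))
              \<le> ennreal (C1 / \<Phi>2 (growth_inv \<Phi>1 (1 / (b - a))))"
    then obtain C1 where C1: "C1 > 0" and H: "\<forall>a b I. a < b \<and> {a<..<b} \<subseteq> I \<and> I \<subseteq> {a..b} \<longrightarrow>
            emeasure \<mu> (carleson_box I (b - a))
              \<le> ennreal (C1 / \<Phi>2 (growth_inv \<Phi>1 (1 / (b - a))))" by blast
    have "\<forall>f\<in>hardy_orlicz \<Phi>1. (\<exists>z\<in>upper_half_plane. f z \<noteq> 0) \<longrightarrow>
            (SUP l\<in>{0<..}. ennreal (\<Phi>2 l) *
               emeasure \<mu> {z\<in>upper_half_plane.
                  ereal (norm (f z)) > ereal ((2 * max 1 C1) * l) * lux_norm \<Phi>1 (nontangential_max f)}) \<le> 1"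
    proof (intro ballI impI)
      fix f assume "f \<in> hardy_orlicz \<Phi>1" and "\<exists>z\<in>upper_half_plane. f z \<noteq> 0"
      then obtain z0 where z0: "z0 \<in> upper_half_plane" "f z0 \<noteq> 0" by blast
      show "(SUP l\<in>{0<..}. ennreal (\<Phi>2 l) *
               emeasure \<mu> {z\<in>upper_half_plane.
                  ereal (norm (f z)) > ereal ((2 * max 1 C1) * l) * lux_norm \<Phi>1 (nontangential_max f)}) \<le> 1"
      proof (rule SUP_least)
        fix l :: real assume "l \<in> {0<..}"
        then have l: "l > 0" by simp
        show "ennreal (\<Phi>2 l) *
               emeasure \<mu> {z\<in>upper_half_plane.
                  ereal (norm (f z)) > ereal ((2 * max 1 C1) * l) * lux_norm \<Phi>1 (nontangential_max f)} \<le> 1"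
          apply (rule a_to_b)
          apply (rule assms(1))
          apply (rule assms(2))
          apply (erule pos1)
          apply (rule assms(7))
          apply (rule assms(9))
          apply (rule assms(10))
          apply (rule C1)
          apply (rule H)
          apply (rule z0(1))
          apply (rule z0(2))
          apply (rule l)
          done
      qed
    qed
    moreover have "2 * max 1 C1 > 0" by simp
    ultimately show "\<exists>C2>0. \<forall>f\<in>hardy_orlicz \<Phi>1. (\<exists>z\<in>upper_half_plane. f z \<noteq> 0) \<longrightarrow>
            (SUP l\<in>{0<..}. ennreal (\<Phi>2 l) *
               emeasure \<mu> {z\<in>upper_half_plane.
                  ereal (norm (f z)) > ereal (C2 * l) * lux_norm \<Phi>1 (nontangential_max f)}) \<le> 1"
      by blast
  next
    assume "\<exists>C2>0. \<forall>f\<in>hardy_orlicz \<Phi>1. (\<exists>z\<in>upper_half_plane. f z \<noteq> 0) \<longrightarrow>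
            (SUP l\<in>{0<..}. ennreal (\<Phi>2 l) *
               emeasure \<mu> {z\<in>upper_half_plane.
                  ereal (norm (f z)) > ereal (C2 * l) * lux_norm \<Phi>1 (nontangential_max f)}) \<le> 1"
    then obtain C2 where C2: "C2 > 0" and Hb: "\<forall>f\<in>hardy_orlicz \<Phi>1. (\<exists>z\<in>upper_half_plane. f z \<noteq> 0) \<longrightarrow>
            (SUP l\<in>{0<..}. ennreal (\<Phi>2 l) *
               emeasure \<mu> {z\<in>upper_half_plane.
                  ereal (norm (f z)) > ereal (C2 * l) * lux_norm \<Phi>1 (nontangential_max f)}) \<le> 1" by blast
    show "\<exists>C1>0. \<forall>a b I. a < b \<and> {a<..<b} \<subseteq> I \<and> I \<subseteq> {a..b} \<longrightarrow>
            emeasure \<mu> (carleson_box I (b - a))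
              \<le> ennreal (C1 / \<Phi>2 (growth_inv \<Phi>1 (1 / (b - a))))"
      by (rule b_to_a[OF assms(1,2) pos1 assms(7,10) C2 Hb])
  qed
qed

end
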